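(* Let $m=2$. For generic $c\in\mathbb{C}^n$, \[\mathrm{rank}_p(\mathrm{Horn}(\mathcal{B},c))=\sum_{1\le i<j\le n}\mathrm{rank}_p(\mathrm{Horn}(\mathcal{B}[i,j],c[i,j])).\]
   Context: $\mathcal{B}=(b_{ji})\in\mathbb{Z}^{n\times 2}$ ($n>2$) has rank 2 with rows $b_1,\dots,b_n$ summing to zero; $c\in\mathbb{C}^n$. For any integer matrix $\mathcal{B}'$ with rows $b'_j\in\mathbb{Z}^2$ and vector $c'$, the Horn system is $\mathrm{Horn}(\mathcal{B}',c')=D_2\langle H_1,H_2\rangle$, $H_i=Q_i-y_iP_i$, $P_i=\prod_{j:b'_{ji}<0}\prod_{l=0}^{|b'_{ji}|-1}(b'_j\cdot\theta_y+c'_j-l)$, $Q_i=\prod_{j:b'_{ji}>0}\prod_{l=0}^{b'_{ji}-1}(b'_j\cdot\theta_y+c'_j-l)$, where $b'_j\cdot\theta_y=b'_{j1}y_1\partial_{y_1}+b'_{j2}y_2\partial_{y_2}$. $\mathcal{B}[i,j]$ is the $2\times2$ submatrix with rows $b_i,b_j$, and $c[i,j]=(c_i,c_j)$. $\mathrm{rank}_p(J)$ is the dimension of the space of Puiseux polynomial solutions (finite linear combinations of monomials with complex exponents) of a $D$-ideal $J$. Generic: outside an exceptional measure-zero set. *)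

theory Defs
  imports "HOL-Analysis.Analysis" "HOL-Library.Function_Algebras"
begin

text \<open>A Puiseux polynomial in y1,y2 is a finite C-linear combination of monomials
 y^a (a in C^2).  It is represented by its coefficient function
 f :: complex^2 => complex with finite support (distinct monomials with complex
 exponents are linearly independent, so this representation is faithful).
 The Euler operator b.theta_y + c acts on y^a by multiplication with b.a + c.\<close>

definition lin_form :: "int^2 \<Rightarrow> complex \<Rightarrow> complex^2 \<Rightarrow> complex" where
  "lin_form b c a = of_int (b$1) * a$1 + of_int (b$2) * a$2 + c"

definition horn_Q :: "'n set \<Rightarrow> ('n \<Rightarrow> int^2) \<Rightarrow> ('n \<Rightarrow> complex) \<Rightarrow> 2 \<Rightarrow> complex^2 \<Rightarrow> complex" where
  "horn_Q I b c i a =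
     (\<Prod>j\<in>{j\<in>I. b j $ i > 0}. \<Prod>l<nat (b j $ i). lin_form (b j) (c j) a - of_nat l)"

definition horn_P :: "'n set \<Rightarrow> ('n \<Rightarrow> int^2) \<Rightarrow> ('n \<Rightarrow> complex) \<Rightarrow> 2 \<Rightarrow> complex^2 \<Rightarrow> complex" where
  "horn_P I b c i a =
     (\<Prod>j\<in>{j\<in>I. b j $ i < 0}. \<Prod>l<nat (- (b j $ i)). lin_form (b j) (c j) a - of_nat l)"

text \<open>Puiseux polynomial solutions of Horn = D_2<H_1,H_2>, H_i = Q_i - y_i P_i:
 the common kernel of the generators.  Coefficientwise, H_i f = 0 reads
 Q_i(a) f(a) - P_i(a - e_i) f(a - e_i) = 0 for every exponent a.\<close>

definition horn_puiseux_sols :: "'n set \<Rightarrow> ('n \<Rightarrow> int^2) \<Rightarrow> ('n \<Rightarrow> complex) \<Rightarrow> (complex^2 \<Rightarrow> complex) set" where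
  "horn_puiseux_sols I b c =
     {f. finite {a. f a \<noteq> 0} \<and>
         (\<forall>i a. horn_Q I b c i a * f a = horn_P I b c i (a - axis i 1) * f (a - axis i 1))}"

definition horn_rank_p :: "'n set \<Rightarrow> ('n \<Rightarrow> int^2) \<Rightarrow> ('n \<Rightarrow> complex) \<Rightarrow> nat" where
  "horn_rank_p I b c =
     vector_space.dim (\<lambda>(s::complex) (f::complex^2 \<Rightarrow> complex) x. s * f x) (horn_puiseux_sols I b c)"

end

theory Submission imports Defs "HOL-Analysis.Gamma_Function" begin

interpretation FS: vector_space "\<lambda>(s::complex) (f::complex^2 \<Rightarrow> complex) x. s * f x"
  by unfold_locales (auto simp: algebra_simps fun_eq_iff)

lemma rank_eq: "horn_rank_p I b c = FS.dim (horn_puiseux_sols I b c)"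
  by (simp add: horn_rank_p_def)

lemma lin_form_add_axis: "lin_form b c (a + axis k t) = lin_form b c a + of_int (b$k) * t"
  using exhaust_2[of k] by (auto simp: lin_form_def axis_def algebra_simps)

lemma lin_form_diff_axis: "lin_form b c (a - axis k t) = lin_form b c a - of_int (b$k) * t"
  using exhaust_2[of k] by (auto simp: lin_form_def axis_def algebra_simps)

lemma axis_zero0: "axis k (0::'a::zero) = 0"
  by (simp add: vec_eq_iff axis_def)

lemma axis_add: "axis k (x::'a::comm_monoid_add) + axis k y = axis k (x + y)"
  by (auto simp: vec_eq_iff axis_def)

lemma solsD: "f \<in> horn_puiseux_sols I b c \<Longrightarrow>
   horn_Q I b c k a * f a = horn_P I b c k (a - axis k 1) * f (a - axis k 1)"
  by (simp add: horn_puiseux_sols_def)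

lemma solsD_fin: "f \<in> horn_puiseux_sols I b c \<Longrightarrow> finite {a. f a \<noteq> 0}"
  by (simp add: horn_puiseux_sols_def)

lemma sum_fun_apply': "finite P \<Longrightarrow> (\<Sum>p\<in>P. F p) x = (\<Sum>p\<in>P. F p x)"
  by (induction P rule: finite_induct) auto

lemma sols_subspace: "FS.subspace (horn_puiseux_sols I b c)"
proof (unfold FS.subspace_def, intro conjI ballI allI)
  show "0 \<in> horn_puiseux_sols I b c" by (simp add: horn_puiseux_sols_def)
next
  fix x y assume x: "x \<in> horn_puiseux_sols I b c" and y: "y \<in> horn_puiseux_sols I b c"
  have "{a. (x + y) a \<noteq> 0} \<subseteq> {a. x a \<noteq> 0} \<union> {a. y a \<noteq> 0}" by auto
  hence "finite {a. (x + y) a \<noteq> 0}" using solsD_fin[OF x] solsD_fin[OF y] finite_subset by blast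
  thus "x + y \<in> horn_puiseux_sols I b c" using solsD[OF x] solsD[OF y]
    by (simp add: horn_puiseux_sols_def algebra_simps)
next
  fix s :: complex and x assume x: "x \<in> horn_puiseux_sols I b c"
  have "{a. s * x a \<noteq> 0} \<subseteq> {a. x a \<noteq> 0}" by auto
  hence "finite {a. s * x a \<noteq> 0}" using solsD_fin[OF x] finite_subset by blast
  thus "(\<lambda>a. s * x a) \<in> horn_puiseux_sols I b c" using solsD[OF x]
    by (simp add: horn_puiseux_sols_def algebra_simps)
qed

lemma prod_int_zero:
  assumes "(\<Prod>l<(n::nat). z - of_nat l) = (0::complex)"
  shows "\<exists>l<n. z = of_nat l"
  using assms by (auto simp: prod_zero_iff)

lemma horn_Q_zero:
  assumes "horn_Q I b c k a = 0" "finite I"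
  shows "\<exists>r\<in>I. b r $ k > 0 \<and> (\<exists>l<nat (b r $ k). lin_form (b r) (c r) a = of_nat l)"
  using assms unfolding horn_Q_def by (auto simp: prod_zero_iff)

lemma horn_P_zero:
  assumes "horn_P I b c k a = 0" "finite I"
  shows "\<exists>r\<in>I. b r $ k < 0 \<and> (\<exists>l<nat (- b r $ k). lin_form (b r) (c r) a = of_nat l)"
  using assms unfolding horn_P_def by (auto simp: prod_zero_iff)

lemma exists_break:
  fixes p :: "nat \<Rightarrow> 'a"
  assumes "inj p" "finite {x. f x \<noteq> 0}" "f (p 0) \<noteq> (0::complex)"
  shows "\<exists>s. f (p s) \<noteq> 0 \<and> f (p (Suc s)) = 0"
proof -
  have fin: "finite {t. f (p t) \<noteq> 0}"
    using finite_vimageI[OF assms(2) assms(1)] by (simp add: vimage_def)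
  then obtain t where t: "f (p t) = 0"
    by (metis (mono_tags, lifting) infinite_UNIV_nat mem_Collect_eq subsetI finite_subset)
  define t0 where "t0 = (LEAST t. f (p t) = 0)"
  have t0: "f (p t0) = 0" unfolding t0_def by (rule LeastI[of _ t], fact)
  have "t0 \<noteq> 0"
  proof
    assume "t0 = 0" thus False using t0 assms(3) by simp
  qed
  then obtain s where s: "t0 = Suc s" using not0_implies_Suc by blast
  have "f (p s) \<noteq> 0" using not_less_Least[of s "\<lambda>t. f (p t) = 0"] s unfolding t0_def by auto
  thus ?thesis using t0 s by auto
qed

lemma run_down:
  assumes f: "f \<in> horn_puiseux_sols I b c" and fa: "f a \<noteq> 0" and I: "finite I"
  shows "\<exists>r\<in>I. b r $ k > 0 \<and> lin_form (b r) (c r) a \<in> \<nat>"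
proof -
  let ?p = "\<lambda>t::nat. a - axis k (of_nat t :: complex)"
  have inj: "inj ?p" by (auto simp: inj_on_def axis_eq_axis)
  have p0: "f (?p 0) \<noteq> 0" using fa by (simp add: axis_zero0)
  obtain s where s: "f (?p s) \<noteq> 0" "f (?p (Suc s)) = 0"
    using exists_break[OF inj solsD_fin[OF f] p0] by blast
  have e: "?p s - axis k 1 = ?p (Suc s)"
    by (simp add: vec_eq_iff axis_def algebra_simps)
  have "horn_Q I b c k (?p s) * f (?p s) = horn_P I b c k (?p (Suc s)) * f (?p (Suc s))"
    using solsD[OF f, of k "?p s"] unfolding e .
  hence "horn_Q I b c k (?p s) * f (?p s) = 0" by (simp only: s(2) mult_zero_right)
  hence "horn_Q I b c k (?p s) = 0" using s by simp
  then obtain r l where r: "r \<in> I" "b r $ k > 0" "l < nat (b r $ k)"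
    "lin_form (b r) (c r) (?p s) = of_nat l"
    using horn_Q_zero[OF _ I] by blast
  have "lin_form (b r) (c r) a = of_nat l + of_int (b r $ k) * of_nat s"
    using r(4) by (simp add: lin_form_diff_axis algebra_simps)
  also have "\<dots> = of_nat (l + nat (b r $ k) * s)" using r(2) by simp
  finally show ?thesis using r by (metis of_nat_in_Nats)
qed

lemma run_up:
  assumes f: "f \<in> horn_puiseux_sols I b c" and fa: "f a \<noteq> 0" and I: "finite I"
  shows "\<exists>r\<in>I. b r $ k < 0 \<and> lin_form (b r) (c r) a \<in> \<nat>"
proof -
  let ?p = "\<lambda>t::nat. a + axis k (of_nat t :: complex)"
  have inj: "inj ?p" by (auto simp: inj_on_def axis_eq_axis)
  have p0: "f (?p 0) \<noteq> 0" using fa by (simp add: axis_zero0)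
  obtain s where s: "f (?p s) \<noteq> 0" "f (?p (Suc s)) = 0"
    using exists_break[OF inj solsD_fin[OF f] p0] by blast
  have e: "?p (Suc s) - axis k 1 = ?p s"
    by (simp add: vec_eq_iff axis_def algebra_simps)
  have "horn_Q I b c k (?p (Suc s)) * f (?p (Suc s)) = horn_P I b c k (?p s) * f (?p s)"
    using solsD[OF f, of k "?p (Suc s)"] unfolding e .
  hence "horn_P I b c k (?p s) * f (?p s) = 0" by (simp only: s(2) mult_zero_right)
  hence "horn_P I b c k (?p s) = 0" using s by simp
  then obtain r l where r: "r \<in> I" "b r $ k < 0" "l < nat (- b r $ k)"
    "lin_form (b r) (c r) (?p s) = of_nat l"
    using horn_P_zero[OF _ I] by blast
  have "lin_form (b r) (c r) a = of_nat l - of_int (b r $ k) * of_nat s"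
    using r(4) by (simp add: lin_form_add_axis algebra_simps)
  also have "\<dots> = of_nat (l + nat (- b r $ k) * s)" using r(2) by simp
  finally show ?thesis using r by (metis of_nat_in_Nats)
qed

definition generic :: "('n::finite \<Rightarrow> int^2) \<Rightarrow> ('n \<Rightarrow> complex) \<Rightarrow> bool" where
  "generic b c \<longleftrightarrow> (\<forall>w::'n \<Rightarrow> int. w \<noteq> 0 \<and> (\<Sum>k\<in>UNIV. w k * b k $ 1) = 0 \<and> (\<Sum>k\<in>UNIV. w k * b k $ 2) = 0
      \<longrightarrow> (\<Sum>k\<in>UNIV. of_int (w k) * c k) \<notin> \<int>)"

lemma gen_contra:
  fixes b :: "'n::finite \<Rightarrow> int^2"
  assumes g: "generic b c" and w: "w \<noteq> 0" "(\<Sum>k\<in>UNIV. w k * b k $ 1) = 0" "(\<Sum>k\<in>UNIV. w k * b k $ 2) = 0"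
    and L: "\<And>k. w k \<noteq> 0 \<Longrightarrow> lin_form (b k) (c k) a \<in> \<int>"
  shows False
proof -
  have "(\<Sum>k\<in>UNIV. of_int (w k) * lin_form (b k) (c k) a)
      = (\<Sum>k\<in>UNIV. of_int (w k) * c k) + a$1 * of_int (\<Sum>k\<in>UNIV. w k * b k $ 1)
         + a$2 * of_int (\<Sum>k\<in>UNIV. w k * b k $ 2)"
    by (simp add: lin_form_def sum.distrib sum_distrib_left algebra_simps)
  also have "\<dots> = (\<Sum>k\<in>UNIV. of_int (w k) * c k)" using w by simp
  finally have e: "(\<Sum>k\<in>UNIV. of_int (w k) * lin_form (b k) (c k) a) = (\<Sum>k\<in>UNIV. of_int (w k) * c k)" .
  have "(\<Sum>k\<in>UNIV. of_int (w k) * lin_form (b k) (c k) a) \<in> \<int>"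
  proof (rule Ints_sum)
    fix k show "of_int (w k) * lin_form (b k) (c k) a \<in> \<int>"
      using L[of k] by (cases "w k = 0") auto
  qed
  thus False using e g w unfolding generic_def by auto
qed

lemma sum_two:
  fixes X :: "'n::finite \<Rightarrow> 'a::comm_ring_1"
  assumes "i \<noteq> j"
  shows "(\<Sum>m\<in>UNIV. (if m = i then p else if m = j then q else 0) * X m) = p * X i + q * X j"
proof -
  have e: "(\<lambda>m. (if m = i then p else if m = j then q else 0) * X m)
       = (\<lambda>m. (if m = i then p * X i else 0) + (if m = j then q * X j else 0))"
    using assms by (auto simp: fun_eq_iff)
  show ?thesis by (subst e) (simp add: sum.distrib)
qed

lemma sum_three:
  fixes X :: "'n::finite \<Rightarrow> 'a::comm_ring_1"
  assumes "i \<noteq> j" "i \<noteq> k" "j \<noteq> k"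
  shows "(\<Sum>m\<in>UNIV. (if m = i then p else if m = j then q else if m = k then r else 0) * X m)
     = p * X i + q * X j + r * X k"
proof -
  have e: "(\<lambda>m. (if m = i then p else if m = j then q else if m = k then r else 0) * X m)
       = (\<lambda>m. (if m = i then p * X i else 0) + (if m = j then q * X j else 0) + (if m = k then r * X k else 0))"
    using assms by (auto simp: fun_eq_iff)
  show ?thesis by (subst e) (simp add: sum.distrib)
qed

lemma gen_pair:
  fixes b :: "'n::finite \<Rightarrow> int^2"
  assumes g: "generic b c" and ij: "i \<noteq> j"
    and D: "b i $ 1 * b j $ 2 - b i $ 2 * b j $ 1 = 0"
    and Li: "lin_form (b i) (c i) a \<in> \<int>" and Lj: "lin_form (b j) (c j) a \<in> \<int>"
  shows False
proof -
  have key: False if pq: "p * b i $ 1 + q * b j $ 1 = 0" "p * b i $ 2 + q * b j $ 2 = 0" "p \<noteq> 0 \<or> q \<noteq> 0" for p q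
  proof -
    define w where "w = (\<lambda>m. if m = i then p else if m = j then q else (0::int))"
    have w0: "w \<noteq> 0" using pq(3) ij unfolding w_def by (auto simp: fun_eq_iff)
    show False
    proof (rule gen_contra[OF g w0])
      show "(\<Sum>k\<in>UNIV. w k * b k $ 1) = 0" unfolding w_def sum_two[OF ij] using pq by simp
      show "(\<Sum>k\<in>UNIV. w k * b k $ 2) = 0" unfolding w_def sum_two[OF ij] using pq by simp
      fix k assume "w k \<noteq> 0" thus "lin_form (b k) (c k) a \<in> \<int>"
        using Li Lj unfolding w_def by (auto split: if_splits)
    qed
  qed
  show False
  proof (cases "b i $ 1 \<noteq> 0")
    case True thus False using D by (intro key[of "- b j $ 1" "b i $ 1"]) (auto simp: algebra_simps)
  next
    case False note F1 = this
    show False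
    proof (cases "b i $ 2 \<noteq> 0")
      case True thus False using D F1 by (intro key[of "- b j $ 2" "b i $ 2"]) (auto simp: algebra_simps)
    next
      case False thus False using F1 by (intro key[of 1 0]) auto
    qed
  qed
qed

lemma gen_three:
  fixes b :: "'n::finite \<Rightarrow> int^2"
  assumes g: "generic b c" and d: "i \<noteq> j" "i \<noteq> k" "j \<noteq> k"
    and Li: "lin_form (b i) (c i) a \<in> \<int>" and Lj: "lin_form (b j) (c j) a \<in> \<int>"
    and Lk: "lin_form (b k) (c k) a \<in> \<int>"
  shows False
proof (cases "b j $ 1 * b k $ 2 - b j $ 2 * b k $ 1 = 0")
  case True thus False using gen_pair[OF g d(3) True Lj Lk] by simp
next
  case False
  define p where "p = b j $ 1 * b k $ 2 - b j $ 2 * b k $ 1"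
  define q where "q = - (b i $ 1 * b k $ 2 - b i $ 2 * b k $ 1)"
  define r where "r = b i $ 1 * b j $ 2 - b i $ 2 * b j $ 1"
  define w where "w = (\<lambda>m. if m = i then p else if m = j then q else if m = k then r else (0::int))"
  have w0: "w \<noteq> 0" using False d unfolding w_def p_def by (auto simp: fun_eq_iff)
  show False
  proof (rule gen_contra[OF g w0])
    show "(\<Sum>m\<in>UNIV. w m * b m $ 1) = 0" unfolding w_def sum_three[OF d]
      by (simp add: p_def q_def r_def algebra_simps)
    show "(\<Sum>m\<in>UNIV. w m * b m $ 2) = 0" unfolding w_def sum_three[OF d]
      by (simp add: p_def q_def r_def algebra_simps)
    fix m assume "w m \<noteq> 0" thus "lin_form (b m) (c m) a \<in> \<int>"
      using Li Lj Lk unfolding w_def by (auto split: if_splits)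
  qed
qed

lemma null_E:
  fixes B :: "int^2^('n::finite)"
  shows "\<exists>E::(complex^'n) set. E \<in> null_sets lborel \<and> (\<forall>c. c \<notin> E \<longrightarrow> generic (\<lambda>j. B$j) (\<lambda>j. c$j))"
proof -
  define W where "W = {w::'n\<Rightarrow>int. w \<noteq> 0 \<and> (\<Sum>k\<in>UNIV. w k * B$k$1) = 0 \<and> (\<Sum>k\<in>UNIV. w k * B$k$2) = 0}"
  define v where "v = (\<lambda>w::'n\<Rightarrow>int. (\<chi> k. of_int (w k) * \<i>) :: complex^'n)"
  define H where "H = (\<lambda>w. {c::complex^'n. v w \<bullet> c = 0})"
  have inner: "v w \<bullet> c = (\<Sum>k\<in>UNIV. of_int (w k) * Im (c$k))" for w c
    by (simp add: v_def inner_vec_def inner_complex_def)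
  have nullH: "H w \<in> null_sets lborel" if "w \<in> W" for w
  proof -
    from that obtain k where k: "w k \<noteq> 0" unfolding W_def by (auto simp: fun_eq_iff)
    have "v w $ k \<noteq> 0" using k by (simp add: v_def)
    hence v0: "v w \<noteq> 0" by auto
    have "negligible (H w)" unfolding H_def by (rule negligible_hyperplane) (use v0 in auto)
    hence "H w \<in> null_sets lebesgue" by (simp add: negligible_iff_null_sets)
    moreover have "H w \<in> sets lborel" unfolding H_def
      by (simp add: borel_closed closed_hyperplane)
    ultimately show ?thesis using null_sets_completion_iff by blast
  qed
  define E where "E = (\<Union>w\<in>W. H w)"
  have "E \<in> null_sets lborel" unfolding E_def
    by (rule null_sets_UN') (auto intro: countable_subset[OF subset_UNIV countableI_type] nullH)
  moreover have "generic (\<lambda>j. B$j) (\<lambda>j. c$j)" if "c \<notin> E" for c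
    unfolding generic_def
  proof (intro allI impI)
    fix w :: "'n \<Rightarrow> int"
    assume "w \<noteq> 0 \<and> (\<Sum>k\<in>UNIV. w k * B$k$1) = 0 \<and> (\<Sum>k\<in>UNIV. w k * B$k$2) = 0"
    hence "w \<in> W" by (simp add: W_def)
    hence "c \<notin> H w" using that by (auto simp: E_def)
    hence ne: "(\<Sum>k\<in>UNIV. of_int (w k) * Im (c$k)) \<noteq> 0" by (simp add: H_def inner)
    show "(\<Sum>k\<in>UNIV. of_int (w k) * c$k) \<notin> \<int>"
    proof
      assume "(\<Sum>k\<in>UNIV. of_int (w k) * c$k) \<in> \<int>"
      hence "Im (\<Sum>k\<in>UNIV. of_int (w k) * c$k) = 0" by (simp add: complex_is_Int_iff)
      thus False using ne by (simp add: Im_sum)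
    qed
  qed
  ultimately show ?thesis by blast
qed

lemma prod_falling_poch: "(\<Prod>l<n. (z::complex) - of_nat l) = pochhammer (z - of_nat n + 1) n"
proof -
  have "(\<Prod>l<n. z - of_nat l) = (\<Prod>i<n. z - of_nat (n - Suc i))"
    by (rule prod.nat_diff_reindex[symmetric])
  also have "\<dots> = (\<Prod>i<n. z - of_nat n + 1 + of_nat i)"
    by (rule prod.cong) (auto simp: of_nat_diff)
  also have "\<dots> = pochhammer (z - of_nat n + 1) n"
    by (simp add: pochhammer_prod atLeast0LessThan)
  finally show ?thesis .
qed

definition UU :: "('n \<Rightarrow> int^2) \<Rightarrow> ('n \<Rightarrow> complex) \<Rightarrow> 'n \<Rightarrow> 2 \<Rightarrow> complex^2 \<Rightarrow> complex" where
  "UU b c r k a = (if b r $ k > 0 then \<Prod>l<nat (b r $ k). lin_form (b r) (c r) a - of_nat l else 1)"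

definition VV :: "('n \<Rightarrow> int^2) \<Rightarrow> ('n \<Rightarrow> complex) \<Rightarrow> 'n \<Rightarrow> 2 \<Rightarrow> complex^2 \<Rightarrow> complex" where
  "VV b c r k a = (if b r $ k < 0 then \<Prod>l<nat (- b r $ k). lin_form (b r) (c r) a - of_nat l else 1)"

lemma horn_Q_prod: "finite I \<Longrightarrow> horn_Q I b c k a = (\<Prod>r\<in>I. UU b c r k a)"
  unfolding horn_Q_def UU_def by (simp add: prod.inter_filter)

lemma horn_P_prod: "finite I \<Longrightarrow> horn_P I b c k a = (\<Prod>r\<in>I. VV b c r k a)"
  unfolding horn_P_def VV_def by (simp add: prod.inter_filter)

lemma gamma_shift:
  "UU b c r k a * rGamma (lin_form (b r) (c r) a + 1)
   = VV b c r k (a - axis k 1) * rGamma (lin_form (b r) (c r) (a - axis k 1) + 1)"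
proof -
  define L where "L = lin_form (b r) (c r) a"
  define m where "m = b r $ k"
  have La: "lin_form (b r) (c r) (a - axis k 1) = L - of_int m"
    by (simp add: L_def m_def lin_form_diff_axis)
  consider "m > 0" | "m < 0" | "m = 0" by linarith
  thus ?thesis
  proof cases
    case 1
    define n where "n = nat m"
    have mn: "of_int m = (of_nat n :: complex)" using 1 by (simp add: n_def)
    have "rGamma (L - of_nat n + 1) = pochhammer (L - of_nat n + 1) n * rGamma (L + 1)"
      using pochhammer_rGamma[of "L - of_nat n + 1" n] by simp
    thus ?thesis using 1 unfolding UU_def VV_def
      by (simp add: La mn prod_falling_poch L_def[symmetric] m_def[symmetric] n_def[symmetric])
  next
    case 2
    define n where "n = nat (- m)"
    have mn: "of_int m = - (of_nat n :: complex)" using 2 by (simp add: n_def)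
    have "rGamma (L + 1) = pochhammer (L + 1) n * rGamma (L + 1 + of_nat n)"
      by (rule pochhammer_rGamma)
    thus ?thesis using 2 unfolding UU_def VV_def
      by (simp add: La mn prod_falling_poch L_def[symmetric] m_def[symmetric] n_def[symmetric] algebra_simps)
  next
    case 3
    thus ?thesis unfolding UU_def VV_def by (simp add: La L_def m_def)
  qed
qed

definition AA :: "('n \<Rightarrow> int^2) \<Rightarrow> ('n \<Rightarrow> complex) \<Rightarrow> 'n \<Rightarrow> 'n \<Rightarrow> (complex^2) set" where
  "AA b c i j = {a. lin_form (b i) (c i) a \<in> \<int> \<and> lin_form (b j) (c j) a \<in> \<int>}"

definition gg :: "('n \<Rightarrow> int^2) \<Rightarrow> ('n \<Rightarrow> complex) \<Rightarrow> 'n \<Rightarrow> 'n \<Rightarrow> complex^2 \<Rightarrow> complex" where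
  "gg b c i j a = (\<Prod>r\<in>UNIV - {i,j}. rGamma (lin_form (b r) (c r) a + 1))"

definition WW :: "('n \<Rightarrow> int^2) \<Rightarrow> ('n \<Rightarrow> complex) \<Rightarrow> 'n \<Rightarrow> 'n \<Rightarrow> 2 \<Rightarrow> complex^2 \<Rightarrow> complex" where
  "WW b c i j k a = (\<Prod>r\<in>UNIV - {i,j}. UU b c r k a * rGamma (lin_form (b r) (c r) a + 1))"

definition TT :: "('n \<Rightarrow> int^2) \<Rightarrow> ('n \<Rightarrow> complex) \<Rightarrow> 'n \<Rightarrow> 'n \<Rightarrow> (complex^2 \<Rightarrow> complex) \<Rightarrow> (complex^2 \<Rightarrow> complex)" where
  "TT b c i j h = (\<lambda>a. gg b c i j a * h a)"

lemma split_Q: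
  fixes b :: "'n::finite \<Rightarrow> int^2"
  shows "horn_Q UNIV b c k a * gg b c i j a = horn_Q {i,j} b c k a * WW b c i j k a"
proof -
  have U: "UNIV = {i,j} \<union> (UNIV - {i,j})" by auto
  have "horn_Q UNIV b c k a = horn_Q {i,j} b c k a * (\<Prod>r\<in>UNIV - {i,j}. UU b c r k a)"
    unfolding horn_Q_prod[OF finite] horn_Q_prod[of "{i,j}"]
    by (subst U, subst prod.union_disjoint) auto
  thus ?thesis unfolding gg_def WW_def by (simp add: prod.distrib)
qed

lemma split_P:
  fixes b :: "'n::finite \<Rightarrow> int^2"
  shows "horn_P UNIV b c k (a - axis k 1) * gg b c i j (a - axis k 1)
     = horn_P {i,j} b c k (a - axis k 1) * WW b c i j k a"
proof -
  have U: "UNIV = {i,j} \<union> (UNIV - {i,j})" by auto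
  have "horn_P UNIV b c k (a - axis k 1) = horn_P {i,j} b c k (a - axis k 1) * (\<Prod>r\<in>UNIV - {i,j}. VV b c r k (a - axis k 1))"
    unfolding horn_P_prod[OF finite] horn_P_prod[of "{i,j}"]
    by (subst U, subst prod.union_disjoint) auto
  moreover have "WW b c i j k a = (\<Prod>r\<in>UNIV - {i,j}. VV b c r k (a - axis k 1) * rGamma (lin_form (b r) (c r) (a - axis k 1) + 1))"
    unfolding WW_def by (rule prod.cong) (auto simp: gamma_shift)
  ultimately show ?thesis unfolding gg_def by (simp add: prod.distrib)
qed

lemma AA_shift: "a - axis k 1 \<in> AA b c i j \<longleftrightarrow> a \<in> AA b c i j"
proof -
  have "lin_form (b r) (c r) (a - axis k 1) \<in> \<int> \<longleftrightarrow> lin_form (b r) (c r) a \<in> \<int>" for r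
  proof -
    have e: "lin_form (b r) (c r) (a - axis k 1) = lin_form (b r) (c r) a - of_int (b r $ k)"
      by (simp add: lin_form_diff_axis)
    show ?thesis unfolding e
      by (metis Ints_diff Ints_add Ints_of_int diff_add_cancel)
  qed
  thus ?thesis unfolding AA_def by auto
qed

lemma notInt_factors:
  assumes "lin_form (b r) (c r) a \<notin> \<int>"
  shows "UU b c r k a \<noteq> 0" "rGamma (lin_form (b r) (c r) a + 1) \<noteq> 0"
proof -
  show "UU b c r k a \<noteq> 0" using assms unfolding UU_def
    by (auto simp: prod_zero_iff)
  show "rGamma (lin_form (b r) (c r) a + 1) \<noteq> 0"
  proof
    assume "rGamma (lin_form (b r) (c r) a + 1) = 0"
    hence "lin_form (b r) (c r) a + 1 \<in> \<int>" by (auto simp: rGamma_eq_zero_iff)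
    hence "lin_form (b r) (c r) a + 1 - 1 \<in> \<int>" by (intro Ints_diff) auto
    thus False using assms by simp
  qed
qed

lemma others_notInt:
  fixes b :: "'n::finite \<Rightarrow> int^2"
  assumes g: "generic b c" and ij: "i \<noteq> j" and a: "a \<in> AA b c i j" and r: "r \<notin> {i,j}"
  shows "lin_form (b r) (c r) a \<notin> \<int>"
  using gen_three[OF g ij, of r a] a r unfolding AA_def by auto

lemma WW_gg_nonzero:
  fixes b :: "'n::finite \<Rightarrow> int^2"
  assumes g: "generic b c" and ij: "i \<noteq> j" and a: "a \<in> AA b c i j"
  shows "WW b c i j k a \<noteq> 0" "gg b c i j a \<noteq> 0"
proof -
  have "UU b c r k a \<noteq> 0 \<and> rGamma (lin_form (b r) (c r) a + 1) \<noteq> 0" if "r \<notin> {i,j}" for r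
    using notInt_factors(1)[where b=b and c=c and r=r and a=a and k=k, OF others_notInt[OF g ij a that]] notInt_factors(2)[where b=b and c=c and r=r and a=a, OF others_notInt[OF g ij a that]] by blast
  thus "WW b c i j k a \<noteq> 0" "gg b c i j a \<noteq> 0" unfolding WW_def gg_def
    by (auto simp: prod_zero_iff)
qed

lemma pair_support:
  fixes b :: "'n::finite \<Rightarrow> int^2"
  assumes h: "h \<in> horn_puiseux_sols {i,j} b c" and ha: "h a \<noteq> 0"
  shows "i \<noteq> j \<and> lin_form (b i) (c i) a \<in> \<nat> \<and> lin_form (b j) (c j) a \<in> \<nat>"
proof -
  obtain r where r: "r \<in> {i,j}" "b r $ 1 > 0" "lin_form (b r) (c r) a \<in> \<nat>"
    using run_down[OF h ha, of 1] by auto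
  obtain r' where r': "r' \<in> {i,j}" "b r' $ 1 < 0" "lin_form (b r') (c r') a \<in> \<nat>"
    using run_up[OF h ha, of 1] by auto
  have "r \<noteq> r'" using r r' by auto
  thus ?thesis using r r' by auto
qed

lemma pair_support_AA:
  fixes b :: "'n::finite \<Rightarrow> int^2"
  assumes h: "h \<in> horn_puiseux_sols {i,j} b c" and ha: "h a \<noteq> 0"
  shows "a \<in> AA b c i j"
  using pair_support[OF h ha] Nats_subset_Ints unfolding AA_def by auto

lemma full_support:
  fixes b :: "'n::finite \<Rightarrow> int^2"
  assumes f: "f \<in> horn_puiseux_sols UNIV b c" and fa: "f a \<noteq> 0"
  shows "\<exists>r r'. r \<noteq> r' \<and> lin_form (b r) (c r) a \<in> \<int> \<and> lin_form (b r') (c r') a \<in> \<int>"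
proof -
  obtain r where r: "b r $ 1 > 0" "lin_form (b r) (c r) a \<in> \<nat>"
    using run_down[OF f fa, of 1] by auto
  obtain r' where r': "b r' $ 1 < 0" "lin_form (b r') (c r') a \<in> \<nat>"
    using run_up[OF f fa, of 1] by auto
  have "r \<noteq> r'" using r r' by auto
  thus ?thesis using r r' Nats_subset_Ints by blast
qed

lemma TT_in:
  fixes b :: "'n::finite \<Rightarrow> int^2"
  assumes h: "h \<in> horn_puiseux_sols {i,j} b c"
  shows "TT b c i j h \<in> horn_puiseux_sols UNIV b c"
proof -
  have "{a. TT b c i j h a \<noteq> 0} \<subseteq> {a. h a \<noteq> 0}" by (auto simp: TT_def)
  hence fin: "finite {a. TT b c i j h a \<noteq> 0}" using solsD_fin[OF h] finite_subset by blast
  have "horn_Q UNIV b c k a * TT b c i j h a = horn_P UNIV b c k (a - axis k 1) * TT b c i j h (a - axis k 1)" for k a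
  proof -
    have "horn_Q UNIV b c k a * TT b c i j h a = (horn_Q {i,j} b c k a * h a) * WW b c i j k a"
      using split_Q[of b c k a i j] unfolding TT_def by (simp add: algebra_simps)
    also have "\<dots> = (horn_P {i,j} b c k (a - axis k 1) * h (a - axis k 1)) * WW b c i j k a"
      using solsD[OF h] by simp
    also have "\<dots> = horn_P UNIV b c k (a - axis k 1) * TT b c i j h (a - axis k 1)"
      using split_P[of b c k a i j] unfolding TT_def by (simp add: algebra_simps)
    finally show ?thesis .
  qed
  thus ?thesis using fin by (simp add: horn_puiseux_sols_def)
qed

lemma TT_onto:
  fixes b :: "'n::finite \<Rightarrow> int^2"
  assumes g: "generic b c" and ij: "i \<noteq> j" and f: "f \<in> horn_puiseux_sols UNIV b c"
    and supp: "\<And>a. f a \<noteq> 0 \<Longrightarrow> a \<in> AA b c i j"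
  shows "\<exists>h\<in>horn_puiseux_sols {i,j} b c. f = TT b c i j h"
proof -
  define h where "h = (\<lambda>a. f a / gg b c i j a)"
  have fT: "f = TT b c i j h"
  proof
    fix a show "f a = TT b c i j h a"
    proof (cases "f a = 0")
      case True thus ?thesis by (simp add: TT_def h_def)
    next
      case False thus ?thesis using WW_gg_nonzero(2)[OF g ij supp[OF False]] by (simp add: TT_def h_def)
    qed
  qed
  have "{a. h a \<noteq> 0} \<subseteq> {a. f a \<noteq> 0}" by (auto simp: h_def)
  hence fin: "finite {a. h a \<noteq> 0}" using solsD_fin[OF f] finite_subset by blast
  have "horn_Q {i,j} b c k a * h a = horn_P {i,j} b c k (a - axis k 1) * h (a - axis k 1)" for k a
  proof (cases "a \<in> AA b c i j")
    case True
    have "(horn_Q {i,j} b c k a * h a) * WW b c i j k a = horn_Q UNIV b c k a * f a"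
      using split_Q[of b c k a i j] fT unfolding TT_def by (simp add: algebra_simps)
    also have "\<dots> = horn_P UNIV b c k (a - axis k 1) * f (a - axis k 1)" using solsD[OF f] by simp
    also have "\<dots> = (horn_P {i,j} b c k (a - axis k 1) * h (a - axis k 1)) * WW b c i j k a"
      using split_P[of b c k a i j] fT unfolding TT_def by (simp add: algebra_simps)
    finally show ?thesis using WW_gg_nonzero(1)[OF g ij True, of k] by simp
  next
    case False
    hence "a - axis k 1 \<notin> AA b c i j" using AA_shift[of a k b c i j] by simp
    hence "f a = 0" "f (a - axis k 1) = 0" using False supp by blast+
    thus ?thesis by (simp add: h_def)
  qed
  hence "h \<in> horn_puiseux_sols {i,j} b c" using fin by (simp add: horn_puiseux_sols_def)
  thus ?thesis using fT by blast
qed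

lemma TT_hom: "module_hom (\<lambda>(s::complex) (f::complex^2 \<Rightarrow> complex) x. s * f x) (\<lambda>(s::complex) (f::complex^2 \<Rightarrow> complex) x. s * f x) (TT b c i j)"
  unfolding module_hom_iff
  by (auto simp: TT_def fun_eq_iff algebra_simps FS.module_axioms)

lemma TT_inj:
  fixes b :: "'n::finite \<Rightarrow> int^2"
  assumes g: "generic b c" and ij: "i \<noteq> j"
  shows "inj_on (TT b c i j) (horn_puiseux_sols {i,j} b c)"
proof (rule inj_onI)
  fix x y assume x: "x \<in> horn_puiseux_sols {i,j} b c" and y: "y \<in> horn_puiseux_sols {i,j} b c"
    and e: "TT b c i j x = TT b c i j y"
  show "x = y"
  proof
    fix a show "x a = y a"
    proof (cases "a \<in> AA b c i j")
      case True
      thus ?thesis using fun_cong[OF e, of a] WW_gg_nonzero(2)[OF g ij True] by (simp add: TT_def)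
    next
      case False
      thus ?thesis using pair_support_AA[OF x] pair_support_AA[OF y] by metis
    qed
  qed
qed

lemma sign_arith:
  fixes u1 u2 v1 v2 :: int
  assumes s1: "u1 * v1 < 0" and s2: "u2 * v2 < 0" and D: "u1 * v2 - u2 * v1 \<noteq> 0"
  defines "d1 \<equiv> (\<bar>v1\<bar> + \<bar>v2\<bar>) * u1 + (\<bar>u1\<bar> + \<bar>u2\<bar>) * v1"
    and "d2 \<equiv> (\<bar>v1\<bar> + \<bar>v2\<bar>) * u2 + (\<bar>u1\<bar> + \<bar>u2\<bar>) * v2"
  shows "d1 \<noteq> 0 \<and> d2 \<noteq> 0 \<and> \<not> (d1 * u1 < 0 \<and> d2 * u2 < 0) \<and> \<not> (d1 * v1 < 0 \<and> d2 * v2 < 0)"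
proof -
  define D where "D = u1 * v2 - u2 * v1"
  have D0: "D > 0 \<or> D < 0" using D D_def by linarith
  have c1: "(u1 > 0 \<and> v1 < 0) \<or> (u1 < 0 \<and> v1 > 0)" using s1 by (auto simp: mult_less_0_iff zero_less_mult_iff)
  have c2: "(u2 > 0 \<and> v2 < 0) \<or> (u2 < 0 \<and> v2 > 0)" using s2 by (auto simp: mult_less_0_iff zero_less_mult_iff)
  show ?thesis
  proof (cases "u1 > 0")
    case p1: True
    hence n1: "v1 < 0" using c1 by auto
    show ?thesis
    proof (cases "u2 > 0")
      case True
      hence "v2 < 0" using c2 by auto
      hence "d1 = - D" "d2 = D" using p1 n1 True unfolding d1_def d2_def D_def by (simp_all add: algebra_simps)
      thus ?thesis using D0 p1 n1 True \<open>v2 < 0\<close> by (auto simp: mult_less_0_iff zero_less_mult_iff)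
    next
      case False
      hence "u2 < 0" "v2 > 0" using c2 by auto
      hence "d1 = D" "d2 = D" using p1 n1 unfolding d1_def d2_def D_def by (simp_all add: algebra_simps)
      thus ?thesis using D0 p1 n1 \<open>u2 < 0\<close> \<open>v2 > 0\<close> by (auto simp: mult_less_0_iff zero_less_mult_iff)
    qed
  next
    case False
    hence p1: "u1 < 0" and n1: "v1 > 0" using c1 by auto
    show ?thesis
    proof (cases "u2 > 0")
      case True
      hence "v2 < 0" using c2 by auto
      hence "d1 = - D" "d2 = - D" using p1 n1 True unfolding d1_def d2_def D_def by (simp_all add: algebra_simps)
      thus ?thesis using D0 p1 n1 True \<open>v2 < 0\<close> by (auto simp: mult_less_0_iff zero_less_mult_iff)
    next
      case False
      hence "u2 < 0" "v2 > 0" using c2 by auto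
      hence "d1 = D" "d2 = - D" using p1 n1 unfolding d1_def d2_def D_def by (simp_all add: algebra_simps)
      thus ?thesis using D0 p1 n1 \<open>u2 < 0\<close> \<open>v2 > 0\<close> by (auto simp: mult_less_0_iff zero_less_mult_iff)
    qed
  qed
qed

lemma pair_bound:
  fixes b :: "'n::finite \<Rightarrow> int^2"
  assumes h: "h \<in> horn_puiseux_sols {i,j} b c" and ij: "i \<noteq> j"
    and D: "b i $ 1 * b j $ 2 - b i $ 2 * b j $ 1 \<noteq> 0"
    and ha: "h a \<noteq> 0"
  defines "K \<equiv> \<bar>b i $ 1\<bar> + \<bar>b i $ 2\<bar> + \<bar>b j $ 1\<bar> + \<bar>b j $ 2\<bar>"
  shows "\<exists>x y. x < nat (K*K) \<and> y < nat (K*K) \<and> lin_form (b i) (c i) a = of_nat x \<and> lin_form (b j) (c j) a = of_nat y"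
proof -
  have sgn: "b i $ k * b j $ k < 0" for k
  proof -
    obtain r where r: "r \<in> {i,j}" "b r $ k > 0" using run_down[OF h ha, of k] by auto
    obtain r' where r': "r' \<in> {i,j}" "b r' $ k < 0" using run_up[OF h ha, of k] by auto
    show ?thesis using r r' by (auto simp: mult_less_0_iff)
  qed
  define \<alpha> where "\<alpha> = \<bar>b j $ 1\<bar> + \<bar>b j $ 2\<bar>"
  define \<beta> where "\<beta> = \<bar>b i $ 1\<bar> + \<bar>b i $ 2\<bar>"
  define d where "d = (\<lambda>k. \<alpha> * b i $ k + \<beta> * b j $ k)"
  have ar: "d 1 \<noteq> 0 \<and> d 2 \<noteq> 0 \<and> \<not> (d 1 * b i $ 1 < 0 \<and> d 2 * b i $ 2 < 0) \<and> \<not> (d 1 * b j $ 1 < 0 \<and> d 2 * b j $ 2 < 0)"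
    using sign_arith[OF sgn[of 1] sgn[of 2] D] unfolding d_def \<alpha>_def \<beta>_def by simp
  have dnz: "d k \<noteq> 0" for k using ar exhaust_2[of k] by auto
  define \<phi> where "\<phi> = (\<lambda>a. real_of_int \<alpha> * Re (lin_form (b i) (c i) a) + real_of_int \<beta> * Re (lin_form (b j) (c j) a))"
  have \<phi>_add: "\<phi> (x + axis k 1) = \<phi> x + real_of_int (d k)" for x k
    unfolding \<phi>_def d_def by (simp add: lin_form_add_axis algebra_simps)
  have \<phi>_diff: "\<phi> (x - axis k 1) = \<phi> x - real_of_int (d k)" for x k
    unfolding \<phi>_def d_def by (simp add: lin_form_diff_axis algebra_simps)
  define S where "S = {a. h a \<noteq> 0}"
  have finS: "finite S" using solsD_fin[OF h] by (simp add: S_def)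
  have aS: "a \<in> S" using ha by (simp add: S_def)
  have "Max (\<phi> ` S) \<in> \<phi> ` S" using finS aS by (intro Max_in) auto
  then obtain as where as: "as \<in> S" "\<phi> as = Max (\<phi> ` S)" by auto
  have asmax: "\<phi> x \<le> \<phi> as" if "x \<in> S" for x using as finS that by simp
  have col: "\<exists>r\<in>{i,j}. d k * b r $ k < 0 \<and> (\<exists>l. l < nat \<bar>b r $ k\<bar> \<and> lin_form (b r) (c r) as = of_nat l)" for k
  proof (cases "d k > 0")
    case True
    have "h (as + axis k 1) = 0"
    proof (rule ccontr)
      assume "h (as + axis k 1) \<noteq> 0"
      hence "\<phi> (as + axis k 1) \<le> \<phi> as" using asmax by (simp add: S_def)
      thus False using True \<phi>_add[of as k] by simp
    qed
    moreover have "horn_Q {i,j} b c k (as + axis k 1) * h (as + axis k 1) = horn_P {i,j} b c k as * h as"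
      using solsD[OF h, of k "as + axis k 1"] by simp
    ultimately have "horn_P {i,j} b c k as = 0" using as(1) by (simp add: S_def)
    then obtain r l where "r \<in> {i,j}" "b r $ k < 0" "l < nat (- b r $ k)" "lin_form (b r) (c r) as = of_nat l"
      using horn_P_zero[of "{i,j}"] by blast
    thus ?thesis using True by (intro bexI[of _ r]) (auto simp: mult_pos_neg)
  next
    case False
    hence dn: "d k < 0" using dnz[of k] by simp
    have "h (as - axis k 1) = 0"
    proof (rule ccontr)
      assume "h (as - axis k 1) \<noteq> 0"
      hence "\<phi> (as - axis k 1) \<le> \<phi> as" using asmax by (simp add: S_def)
      thus False using dn \<phi>_diff[of as k] by simp
    qed
    hence "horn_Q {i,j} b c k as * h as = 0" using solsD[OF h, of k as] by simp
    hence "horn_Q {i,j} b c k as = 0" using as(1) by (simp add: S_def)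
    then obtain r l where "r \<in> {i,j}" "b r $ k > 0" "l < nat (b r $ k)" "lin_form (b r) (c r) as = of_nat l"
      using horn_Q_zero[of "{i,j}"] by blast
    thus ?thesis using dn by (intro bexI[of _ r]) (auto simp: mult_neg_pos)
  qed
  obtain r1 l1 where r1: "r1 \<in> {i,j}" "d 1 * b r1 $ 1 < 0" "l1 < nat \<bar>b r1 $ 1\<bar>" "lin_form (b r1) (c r1) as = of_nat l1"
    using col[of 1] by blast
  obtain r2 l2 where r2: "r2 \<in> {i,j}" "d 2 * b r2 $ 2 < 0" "l2 < nat \<bar>b r2 $ 2\<bar>" "lin_form (b r2) (c r2) as = of_nat l2"
    using col[of 2] by blast
  have "r1 \<noteq> r2" using ar r1 r2 by auto
  hence rr: "(r1 = i \<and> r2 = j) \<or> (r1 = j \<and> r2 = i)" using r1 r2 by auto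
  have bnd: "int l < K" if "l < nat \<bar>b r $ k\<bar>" "r \<in> {i,j}" for l r k
  proof -
    have "\<bar>b r $ k\<bar> \<le> K" using that(2) exhaust_2[of k] unfolding K_def by auto
    thus ?thesis using that(1) by linarith
  qed
  obtain li lj where li: "int li < K" "lin_form (b i) (c i) as = of_nat li"
    and lj: "int lj < K" "lin_form (b j) (c j) as = of_nat lj"
    using rr bnd[OF r1(3) r1(1)] bnd[OF r2(3) r2(1)] r1(4) r2(4) by blast
  obtain x where x: "lin_form (b i) (c i) a = of_nat x"
    using pair_support[OF h ha] by (auto elim: Nats_cases)
  obtain y where y: "lin_form (b j) (c j) a = of_nat y"
    using pair_support[OF h ha] by (auto elim: Nats_cases)
  have "\<phi> a \<le> \<phi> as" using asmax aS by simp
  hence "real_of_int (\<alpha> * int x + \<beta> * int y) \<le> real_of_int (\<alpha> * int li + \<beta> * int lj)"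
    unfolding \<phi>_def x y li(2) lj(2) by simp
  hence ineq: "\<alpha> * int x + \<beta> * int y \<le> \<alpha> * int li + \<beta> * int lj"
    by (simp only: of_int_le_iff)
  have a1: "\<alpha> \<ge> 1" using sgn[of 1] unfolding \<alpha>_def by (auto simp: mult_less_0_iff)
  have b1: "\<beta> \<ge> 1" using sgn[of 1] unfolding \<beta>_def by (auto simp: mult_less_0_iff)
  have K: "K = \<alpha> + \<beta>" unfolding K_def \<alpha>_def \<beta>_def by simp
  have "\<alpha> * int li \<le> \<alpha> * (K - 1)" using li(1) a1 by (intro mult_left_mono) auto
  moreover have "\<beta> * int lj \<le> \<beta> * (K - 1)" using lj(1) b1 by (intro mult_left_mono) auto
  moreover have "int x \<le> \<alpha> * int x" using a1 by (simp add: mult_le_cancel_right1)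
  moreover have "int y \<le> \<beta> * int y" using b1 by (simp add: mult_le_cancel_right1)
  moreover have "0 \<le> \<alpha> * int x" "0 \<le> \<beta> * int y" using a1 b1 by auto
  moreover have "\<alpha> * (K - 1) + \<beta> * (K - 1) = K * K - K" using K by (simp add: algebra_simps)
  moreover have "K \<ge> 1" using K a1 b1 by simp
  ultimately have "int x < K * K" "int y < K * K" using ineq by linarith+
  thus ?thesis using x y by (intro exI[of _ x] exI[of _ y]) auto
qed

lemma lin_pair_inj:
  assumes D: "b i $ 1 * b j $ 2 - b i $ 2 * b j $ 1 \<noteq> 0"
  shows "inj (\<lambda>a. (lin_form (b i) (c i) a, lin_form (b j) (c j) a))"
proof (rule injI)
  fix a a' :: "complex^2"
  assume "(lin_form (b i) (c i) a, lin_form (b j) (c j) a) = (lin_form (b i) (c i) a', lin_form (b j) (c j) a')"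
  hence e1: "of_int (b i $ 1) * (a$1 - a'$1) + of_int (b i $ 2) * (a$2 - a'$2) = 0"
    and e2: "of_int (b j $ 1) * (a$1 - a'$1) + of_int (b j $ 2) * (a$2 - a'$2) = (0::complex)"
    by (auto simp: lin_form_def algebra_simps)
  define Dc where "Dc = (of_int (b i $ 1 * b j $ 2 - b i $ 2 * b j $ 1) :: complex)"
  have Dc: "Dc \<noteq> 0" using D unfolding Dc_def of_int_eq_0_iff by simp
  have "Dc * (a$1 - a'$1) = of_int (b j $ 2) * (of_int (b i $ 1) * (a$1 - a'$1) + of_int (b i $ 2) * (a$2 - a'$2))
      - of_int (b i $ 2) * (of_int (b j $ 1) * (a$1 - a'$1) + of_int (b j $ 2) * (a$2 - a'$2))"
    by (simp add: Dc_def algebra_simps)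
  hence "Dc * (a$1 - a'$1) = 0" using e1 e2 by simp
  hence 1: "a$1 = a'$1" using Dc by simp
  have "Dc * (a$2 - a'$2) = of_int (b i $ 1) * (of_int (b j $ 1) * (a$1 - a'$1) + of_int (b j $ 2) * (a$2 - a'$2))
      - of_int (b j $ 1) * (of_int (b i $ 1) * (a$1 - a'$1) + of_int (b i $ 2) * (a$2 - a'$2))"
    by (simp add: Dc_def algebra_simps)
  hence "Dc * (a$2 - a'$2) = 0" using e1 e2 by simp
  hence 2: "a$2 = a'$2" using Dc by simp
  show "a = a'" using 1 2 by (simp add: vec_eq_iff forall_2)
qed

lemma pair_finite:
  fixes b :: "'n::finite \<Rightarrow> int^2"
  assumes g: "generic b c" and ij: "i \<noteq> j"
  shows "\<exists>F. finite F \<and> (\<forall>h\<in>horn_puiseux_sols {i,j} b c. \<forall>a. h a \<noteq> 0 \<longrightarrow> a \<in> F)"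
proof (cases "b i $ 1 * b j $ 2 - b i $ 2 * b j $ 1 = 0")
  case True
  have "h a = 0" if "h \<in> horn_puiseux_sols {i,j} b c" for h a
  proof (rule ccontr)
    assume "h a \<noteq> 0"
    hence "a \<in> AA b c i j" using pair_support_AA[OF that] by blast
    thus False using gen_pair[OF g ij True] unfolding AA_def by blast
  qed
  thus ?thesis by (intro exI[of _ "{}"]) auto
next
  case False
  define K where "K = \<bar>b i $ 1\<bar> + \<bar>b i $ 2\<bar> + \<bar>b j $ 1\<bar> + \<bar>b j $ 2\<bar>"
  define X where "X = (of_nat :: nat \<Rightarrow> complex) ` {..<nat (K*K)}"
  define F where "F = (\<lambda>a. (lin_form (b i) (c i) a, lin_form (b j) (c j) a)) -` (X \<times> X)"
  have "finite F" unfolding F_def X_def by (intro finite_vimageI lin_pair_inj False) auto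
  moreover have "a \<in> F" if "h \<in> horn_puiseux_sols {i,j} b c" "h a \<noteq> 0" for h a
    using pair_bound[OF that(1) ij False that(2)] unfolding F_def X_def K_def by auto
  ultimately show ?thesis by blast
qed

definition delta :: "complex^2 \<Rightarrow> complex^2 \<Rightarrow> complex" where
  "delta a = (\<lambda>x. if x = a then 1 else 0)"

lemma in_span_delta:
  assumes "finite F" "\<And>a. h a \<noteq> 0 \<Longrightarrow> a \<in> F"
  shows "h \<in> FS.span (delta ` F)"
proof -
  have "h = (\<Sum>a\<in>F. (\<lambda>x. h a * delta a x))"
  proof
    fix x
    have "(\<Sum>a\<in>F. (\<lambda>x. h a * delta a x)) x = (\<Sum>a\<in>F. h a * delta a x)"
      by (rule sum_fun_apply'[OF assms(1)])
    also have "\<dots> = (\<Sum>a\<in>F. if a = x then h x else 0)"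
      by (rule sum.cong) (auto simp: delta_def)
    also have "\<dots> = h x" using assms by (auto simp: sum.delta)
    finally show "h x = (\<Sum>a\<in>F. (\<lambda>x. h a * delta a x)) x" by simp
  qed
  also have "\<dots> \<in> FS.span (delta ` F)"
    by (intro FS.span_sum FS.span_scale[of _ _ "h _", simplified] FS.span_base) auto
  finally show ?thesis .
qed

lemma restrict_sols:
  assumes f: "f \<in> horn_puiseux_sols I b c"
  shows "(\<lambda>x. if x \<in> AA b c i j then f x else 0) \<in> horn_puiseux_sols I b c"
proof -
  have "{a. (if a \<in> AA b c i j then f a else 0) \<noteq> 0} \<subseteq> {a. f a \<noteq> 0}" by auto
  hence fin: "finite {a. (if a \<in> AA b c i j then f a else 0) \<noteq> 0}" using solsD_fin[OF f] finite_subset by blast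
  have "horn_Q I b c k a * (if a \<in> AA b c i j then f a else 0)
      = horn_P I b c k (a - axis k 1) * (if a - axis k 1 \<in> AA b c i j then f (a - axis k 1) else 0)" for k a
    using solsD[OF f, of k a] AA_shift[of a k b c i j] by auto
  thus ?thesis using fin by (simp add: horn_puiseux_sols_def)
qed

lemma AA_disjoint:
  fixes b :: "'n::{finite,linorder} \<Rightarrow> int^2"
  assumes g: "generic b c" and p: "i < j" and q: "i' < j'" and ne: "(i,j) \<noteq> (i',j')"
    and x: "x \<in> AA b c i j" "x \<in> AA b c i' j'"
  shows False
proof -
  have ij: "i \<noteq> j" using p by simp
  have "\<exists>r. r \<notin> {i,j} \<and> r \<in> {i',j'}"
  proof (rule ccontr)
    assume "\<not> ?thesis"
    hence "i' \<in> {i,j}" "j' \<in> {i,j}" by auto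
    thus False using p q ne by auto
  qed
  then obtain r where r: "r \<notin> {i,j}" "r \<in> {i',j'}" by blast
  have "lin_form (b r) (c r) x \<in> \<int>" using r(2) x(2) unfolding AA_def by auto
  thus False using others_notInt[OF g ij x(1) r(1)] by simp
qed

lemma main_rank:
  fixes b :: "'n::{finite,linorder} \<Rightarrow> int^2"
  assumes g: "generic b c"
  shows "FS.dim (horn_puiseux_sols UNIV b c) = (\<Sum>(i,j)\<in>{(i,j). i < j}. FS.dim (horn_puiseux_sols {i,j} b c))"
proof -
  define P where "P = {(i,j). (i::'n) < j}"
  have finP: "finite P" by simp
  define AP where "AP = (\<lambda>p. AA b c (fst p) (snd p))"
  define VP where "VP = (\<lambda>p. horn_puiseux_sols {fst p, snd p} b c)"
  define TP where "TP = (\<lambda>p. TT b c (fst p) (snd p))"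
  have neq: "fst p \<noteq> snd p" if "p \<in> P" for p using that by (auto simp: P_def)
  have "\<forall>p. \<exists>B. B \<subseteq> VP p \<and> FS.independent B \<and> VP p \<subseteq> FS.span B \<and> card B = FS.dim (VP p)"
    using FS.basis_exists by metis
  then obtain Bs where Bs: "\<And>p. Bs p \<subseteq> VP p" "\<And>p. FS.independent (Bs p)"
    "\<And>p. VP p \<subseteq> FS.span (Bs p)" "\<And>p. card (Bs p) = FS.dim (VP p)"
    by metis
  have finB: "finite (Bs p)" if pP: "p \<in> P" for p
  proof -
    obtain F where F: "finite F" "\<forall>h\<in>VP p. \<forall>a. h a \<noteq> 0 \<longrightarrow> a \<in> F"
      using pair_finite[OF g neq[OF pP]] unfolding VP_def by blast
    have "Bs p \<subseteq> FS.span (delta ` F)" using Bs(1) F in_span_delta by blast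
    thus ?thesis using FS.independent_span_bound[OF finite_imageI[OF F(1)] Bs(2)] by blast
  qed
  have spanV: "FS.span (Bs p) \<subseteq> VP p" for p
    using Bs(1) FS.span_minimal[OF _ sols_subspace] unfolding VP_def by blast
  have injT: "inj_on (TP p) (VP p)" if "p \<in> P" for p
    using TT_inj[OF g neq[OF that]] unfolding TP_def VP_def by simp
  have hom: "module_hom (\<lambda>(s::complex) (f::complex^2 \<Rightarrow> complex) x. s * f x) (\<lambda>(s::complex) (f::complex^2 \<Rightarrow> complex) x. s * f x) (TP p)" for p
    unfolding TP_def by (rule TT_hom)
  have suppV: "a \<in> AP p" if "h \<in> VP p" "h a \<noteq> 0" for h a p
    using pair_support_AA[OF that[unfolded VP_def]] unfolding AP_def by simp
  have TPapp: "TP p h a = gg b c (fst p) (snd p) a * h a" for p h a by (simp add: TP_def TT_def)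
  have suppT: "a \<in> AP p" if "v \<in> TP p ` Bs p" "v a \<noteq> 0" for v a p
    using that Bs(1) suppV TPapp by fastforce
  have disj: "\<not> (a \<in> AP p \<and> a \<in> AP q)" if "p \<in> P" "q \<in> P" "p \<noteq> q" for a p q
    using AA_disjoint[OF g, of "fst p" "snd p" "fst q" "snd q" a] that unfolding P_def AP_def
    by (auto simp: prod_eq_iff)
  have TinV: "TP p ` Bs p \<subseteq> horn_puiseux_sols UNIV b c" for p
    using Bs(1) TT_in unfolding TP_def VP_def by blast
  have nz: "v \<noteq> 0" if pv: "p \<in> P" "v \<in> TP p ` Bs p" for p v
  proof
    assume v0: "v = 0"
    obtain h where h: "h \<in> Bs p" "v = TP p h" using pv(2) by blast
    have "h \<noteq> 0" using h(1) Bs(2) FS.dependent_zero by blast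
    moreover have "TP p 0 = 0" by (simp add: TP_def TT_def fun_eq_iff)
    moreover have "0 \<in> VP p" unfolding VP_def by (simp add: horn_puiseux_sols_def)
    ultimately show False using injT[OF pv(1)] h Bs(1) v0 by (metis inj_onD subsetD)
  qed
  have indT: "FS.independent (TP p ` Bs p)" if "p \<in> P" for p
    using module_hom.independent_injective_image[OF hom Bs(2)] inj_on_subset[OF injT[OF that] spanV]
    by blast
  define BB where "BB = (\<Union>p\<in>P. TP p ` Bs p)"
  have BBsub: "BB \<subseteq> horn_puiseux_sols UNIV b c" using TinV unfolding BB_def by blast
  have BBspan: "horn_puiseux_sols UNIV b c \<subseteq> FS.span BB"
  proof
    fix f assume f: "f \<in> horn_puiseux_sols UNIV b c"
    define R where "R = (\<lambda>p x. if x \<in> AP p then f x else 0)"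
    have Rspan: "R p \<in> FS.span BB" if pP: "p \<in> P" for p
    proof -
      have "R p \<in> horn_puiseux_sols UNIV b c" unfolding R_def AP_def by (rule restrict_sols[OF f])
      moreover have "R p a \<noteq> 0 \<Longrightarrow> a \<in> AA b c (fst p) (snd p)" for a by (auto simp: R_def AP_def split: if_splits)
      ultimately obtain h where h: "h \<in> VP p" "R p = TP p h"
        using TT_onto[OF g neq[OF pP]] unfolding VP_def TP_def by blast
      have "R p \<in> TP p ` FS.span (Bs p)" using h Bs(3) by blast
      also have "\<dots> = FS.span (TP p ` Bs p)" using module_hom.span_image[OF hom] by metis
      also have "\<dots> \<subseteq> FS.span BB" by (rule FS.span_mono) (use pP in \<open>auto simp: BB_def\<close>)
      finally show ?thesis .
    qed
    have "f = (\<Sum>p\<in>P. R p)"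
    proof
      fix x
      have "(\<Sum>p\<in>P. R p) x = (\<Sum>p\<in>P. R p x)" by (rule sum_fun_apply'[OF finP])
      also have "\<dots> = f x"
      proof (cases "f x = 0")
        case True
        have "(\<Sum>p\<in>P. R p x) = 0" by (rule sum.neutral) (simp add: R_def True)
        thus ?thesis using True by simp
      next
        case False
        obtain r r' where rr: "r \<noteq> r'" "lin_form (b r) (c r) x \<in> \<int>" "lin_form (b r') (c r') x \<in> \<int>"
          using full_support[OF f False] by blast
        define p0 where "p0 = (min r r', max r r')"
        have p0P: "p0 \<in> P" using rr(1) by (auto simp: P_def p0_def min_def max_def)
        have xp0: "x \<in> AP p0" using rr by (auto simp: AP_def AA_def p0_def min_def max_def)
        have "(\<Sum>p\<in>P. R p x) = (\<Sum>p\<in>P. if p = p0 then f x else 0)"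
        proof (rule sum.cong)
          fix p assume "p \<in> P"
          thus "R p x = (if p = p0 then f x else 0)" using disj[OF _ p0P, of p x] xp0 by (auto simp: R_def)
        qed simp
        also have "\<dots> = f x" using p0P finP by simp
        finally show ?thesis .
      qed
      finally show "f x = (\<Sum>p\<in>P. R p) x" by simp
    qed
    also have "\<dots> \<in> FS.span BB" by (rule FS.span_sum) (rule Rspan)
    finally show "f \<in> FS.span BB" .
  qed
  have BBind: "FS.independent BB"
    unfolding FS.independent_explicit_finite_subsets
  proof (intro allI impI ballI)
    fix S u v0
    assume S: "S \<subseteq> BB" "finite S" and sum0: "(\<Sum>v\<in>S. (\<lambda>x. u v * v x)) = 0" and v0: "v0 \<in> S"
    obtain p0 where p0: "p0 \<in> P" "v0 \<in> TP p0 ` Bs p0" using S(1) v0 unfolding BB_def by blast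
    define S0 where "S0 = S \<inter> TP p0 ` Bs p0"
    have "(\<Sum>v\<in>S0. (\<lambda>x. u v * v x)) = 0"
    proof
      fix x
      have "(\<Sum>v\<in>S0. (\<lambda>x. u v * v x)) x = (\<Sum>v\<in>S0. u v * v x)"
        by (rule sum_fun_apply') (use S(2) in \<open>simp add: S0_def\<close>)
      also have "\<dots> = 0"
      proof (cases "x \<in> AP p0")
        case True
        have "(\<Sum>v\<in>S. u v * v x) = (\<Sum>v\<in>S0. u v * v x)"
        proof (rule sum.mono_neutral_right[OF S(2)])
          show "S0 \<subseteq> S" by (simp add: S0_def)
          show "\<forall>v\<in>S - S0. u v * v x = 0"
          proof
            fix v assume v: "v \<in> S - S0"
            then obtain q where q: "q \<in> P" "v \<in> TP q ` Bs q" using S(1) unfolding BB_def by blast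
            have "q \<noteq> p0" using q v by (auto simp: S0_def)
            hence "v x = 0" using suppT[OF q(2)] disj[OF q(1) p0(1)] True by blast
            thus "u v * v x = 0" by simp
          qed
        qed
        moreover have "(\<Sum>v\<in>S. u v * v x) = 0"
          using fun_cong[OF sum0, of x] sum_fun_apply'[OF S(2), of "\<lambda>v x. u v * v x" x] by simp
        ultimately show ?thesis by simp
      next
        case False
        have "v x = 0" if "v \<in> S0" for v using suppT[of v p0 x] that False by (auto simp: S0_def)
        thus ?thesis by (auto intro!: sum.neutral)
      qed
      finally show "(\<Sum>v\<in>S0. (\<lambda>x. u v * v x)) x = 0 x" by simp
    qed
    moreover have "finite S0" using S(2) by (simp add: S0_def)
    moreover have "v0 \<in> S0" using v0 p0 by (simp add: S0_def)
    ultimately show "u v0 = 0"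
      using FS.independentD[OF indT[OF p0(1)], of S0 u v0] by (simp add: S0_def)
  qed
  have "FS.dim (horn_puiseux_sols UNIV b c) = card BB"
    using FS.basis_card_eq_dim[OF BBsub BBspan BBind] by simp
  also have "card BB = (\<Sum>p\<in>P. card (TP p ` Bs p))"
    unfolding BB_def
  proof (rule card_UN_disjoint[OF finP])
    show "\<forall>p\<in>P. finite (TP p ` Bs p)" using finB by blast
    show "\<forall>p\<in>P. \<forall>q\<in>P. p \<noteq> q \<longrightarrow> TP p ` Bs p \<inter> TP q ` Bs q = {}"
    proof (intro ballI impI)
      fix p q assume pq: "p \<in> P" "q \<in> P" "p \<noteq> q"
      show "TP p ` Bs p \<inter> TP q ` Bs q = {}"
      proof (rule ccontr)
        assume "TP p ` Bs p \<inter> TP q ` Bs q \<noteq> {}"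
        then obtain v where v: "v \<in> TP p ` Bs p" "v \<in> TP q ` Bs q" by blast
        have "v a = 0" for a using suppT[OF v(1)] suppT[OF v(2)] disj[OF pq] by blast
        hence "v = 0" by auto
        thus False using nz[OF pq(1) v(1)] by simp
      qed
    qed
  qed
  also have "\<dots> = (\<Sum>p\<in>P. FS.dim (VP p))"
  proof (rule sum.cong)
    fix p assume p: "p \<in> P"
    have "card (TP p ` Bs p) = card (Bs p)" using inj_on_subset[OF injT[OF p] Bs(1)] by (rule card_image)
    thus "card (TP p ` Bs p) = FS.dim (VP p)" using Bs(4) by simp
  qed simp
  also have "\<dots> = (\<Sum>(i,j)\<in>{(i,j). i < j}. FS.dim (horn_puiseux_sols {i,j} b c))"
    unfolding P_def VP_def by (rule sum.cong) auto
  finally show ?thesis .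
qed

theorem lemma6p2:
  fixes B :: "int^2^('n::{finite,linorder})"
  assumes "CARD('n) > 2"
    and "rank (\<chi> j k. real_of_int (B $ j $ k)) = 2"
    and "(\<Sum>j\<in>UNIV. B $ j) = 0"
  shows "\<exists>E :: (complex^('n::{finite,linorder})) set. E \<in> null_sets lborel \<and>
           (\<forall>c. c \<notin> E \<longrightarrow>
              horn_rank_p UNIV (\<lambda>j. B $ j) (\<lambda>j. c $ j) =
              (\<Sum>(i, j)\<in>{(i, j). i < j}. horn_rank_p {i, j} (\<lambda>j. B $ j) (\<lambda>j. c $ j)))"
proof -
  obtain E :: "(complex^('n::{finite,linorder})) set" where E: "E \<in> null_sets lborel" "\<forall>c. c \<notin> E \<longrightarrow> generic (\<lambda>j. B$j) (\<lambda>j. c$j)"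
    using null_E by blast
  show ?thesis
  proof (intro exI[of _ E] conjI allI impI)
    show "E \<in> null_sets lborel" by (rule E(1))
    fix c :: "complex^('n::{finite,linorder})" assume "c \<notin> E"
    hence "generic (\<lambda>j. B$j) (\<lambda>j. c$j)" using E(2) by blast
    thus "horn_rank_p UNIV (\<lambda>j. B $ j) (\<lambda>j. c $ j) =
              (\<Sum>(i, j)\<in>{(i, j). i < j}. horn_rank_p {i, j} (\<lambda>j. B $ j) (\<lambda>j. c $ j))"
      using main_rank by (simp add: rank_eq)
  qed
qed

end
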